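(* Let $\{R_i\}_{i\in I}$ be a family of commutative rings with identity and $R=\prod_{i\in I}R_i$. If $R$ is almost complemented, then each $R_i$ is almost complemented. Conversely, if each $R_i$ is almost complemented and the family $\{R_i\}$ is of bounded nilpotence, then $R$ is almost complemented.
   Context: For a ring $A$, $\mathfrak{N}(A)$ is the nilradical and $\mathrm{reg}(A)$ the set of regular elements. $A$ is complemented if for every $a\in A$ there is $b$ with $ab=0$ and $a+b\in\mathrm{reg}(A)$; $A$ is almost complemented if $A/\mathfrak{N}(A)$ is complemented. A family $\{R_i\}$ is of bounded nilpotence if there is $k\in\mathbb{N}$ with $x^k=0$ for all $i$ and all $x\in\mathfrak{N}(R_i)$. *)

theory Defs
  imports "HOL-Algebra.Algebra"
begin

definition nilradical :: "('a, 'm) ring_scheme \<Rightarrow> 'a set" where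
  "nilradical A = {x \<in> carrier A. \<exists>n::nat. x [^]\<^bsub>A\<^esub> n = \<zero>\<^bsub>A\<^esub>}"

definition reg :: "('a, 'm) ring_scheme \<Rightarrow> 'a set" where
  "reg A = {x \<in> carrier A. \<forall>c \<in> carrier A. x \<otimes>\<^bsub>A\<^esub> c = \<zero>\<^bsub>A\<^esub> \<longrightarrow> c = \<zero>\<^bsub>A\<^esub>}"

definition complemented :: "('a, 'm) ring_scheme \<Rightarrow> bool" where
  "complemented A \<longleftrightarrow> (\<forall>a \<in> carrier A. \<exists>b \<in> carrier A.
      a \<otimes>\<^bsub>A\<^esub> b = \<zero>\<^bsub>A\<^esub> \<and> a \<oplus>\<^bsub>A\<^esub> b \<in> reg A)"

definition almost_complemented :: "('a, 'm) ring_scheme \<Rightarrow> bool" where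
  "almost_complemented A \<longleftrightarrow> complemented (A Quot (nilradical A))"

definition prod_ring :: "'i set \<Rightarrow> ('i \<Rightarrow> ('a, 'm) ring_scheme) \<Rightarrow> ('i \<Rightarrow> 'a) ring" where
  "prod_ring I R = \<lparr> partial_object.carrier = (\<Pi>\<^sub>E i\<in>I. carrier (R i)),
     monoid.mult = (\<lambda>x y. \<lambda>i\<in>I. x i \<otimes>\<^bsub>R i\<^esub> y i),
     monoid.one = (\<lambda>i\<in>I. \<one>\<^bsub>R i\<^esub>),
     ring.zero = (\<lambda>i\<in>I. \<zero>\<^bsub>R i\<^esub>),
     ring.add = (\<lambda>x y. \<lambda>i\<in>I. x i \<oplus>\<^bsub>R i\<^esub> y i) \<rparr>"

definition bounded_nilpotence :: "'i set \<Rightarrow> ('i \<Rightarrow> ('a, 'm) ring_scheme) \<Rightarrow> bool" where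
  "bounded_nilpotence I R \<longleftrightarrow> (\<exists>k::nat. \<forall>i \<in> I. \<forall>x \<in> nilradical (R i). x [^]\<^bsub>R i\<^esub> k = \<zero>\<^bsub>R i\<^esub>)"

end

theory Submission
  imports Defs
begin


lemma (in cring) binom_aux:
  fixes p q :: nat
  assumes x: "x \<in> carrier R" and y: "y \<in> carrier R"
  shows "\<exists>r\<in>carrier R. \<exists>s\<in>carrier R. (x \<oplus> y) [^] (p + q) = x [^] p \<otimes> r \<oplus> y [^] q \<otimes> s"
proof (induction p arbitrary: q)
  case 0
  show ?case
    by (rule bexI[where x="(x \<oplus> y) [^] q"], rule bexI[where x="\<zero>"]) (use x y in auto)
next
  case (Suc p)
  show ?case
  proof (induction q)
    case 0
    show ?case
      by (rule bexI[where x="\<zero>"], rule bexI[where x="(x \<oplus> y) [^] Suc p"]) (use x y in auto)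
  next
    case (Suc q)
    obtain r1 s1 where r1: "r1 \<in> carrier R" and s1: "s1 \<in> carrier R"
      and e1: "(x \<oplus> y) [^] (p + Suc q) = x [^] p \<otimes> r1 \<oplus> y [^] Suc q \<otimes> s1"
      using \<open>\<And>q. \<exists>r\<in>carrier R. \<exists>s\<in>carrier R. (x \<oplus> y) [^] (p + q) = x [^] p \<otimes> r \<oplus> y [^] q \<otimes> s\<close> by blast
    obtain r2 s2 where r2: "r2 \<in> carrier R" and s2: "s2 \<in> carrier R"
      and e2: "(x \<oplus> y) [^] (Suc p + q) = x [^] Suc p \<otimes> r2 \<oplus> y [^] q \<otimes> s2"
      using Suc.IH by blast
    define E where "E = (x \<oplus> y) [^] (p + Suc q)"
    define Xp where "Xp = x [^] p"
    define Yq where "Yq = y [^] q"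
    have XY: "Xp \<in> carrier R" "Yq \<in> carrier R" "E \<in> carrier R" using x y by (auto simp: Xp_def Yq_def E_def)
    have ex: "E = Xp \<otimes> r1 \<oplus> Yq \<otimes> y \<otimes> s1" using e1 by (simp add: E_def Xp_def Yq_def)
    have ey: "E = Xp \<otimes> x \<otimes> r2 \<oplus> Yq \<otimes> s2" using e2 by (simp add: E_def Xp_def Yq_def)
    have "(x \<oplus> y) [^] (Suc p + Suc q) = E \<otimes> x \<oplus> E \<otimes> y"
      using x y XY by (simp add: E_def r_distr)
    also have "\<dots> = (Xp \<otimes> r1 \<oplus> Yq \<otimes> y \<otimes> s1) \<otimes> x \<oplus> (Xp \<otimes> x \<otimes> r2 \<oplus> Yq \<otimes> s2) \<otimes> y"
      using ex ey by metis
    also have "\<dots> = (Xp \<otimes> x) \<otimes> (r1 \<oplus> r2 \<otimes> y) \<oplus> (Yq \<otimes> y) \<otimes> (s1 \<otimes> x \<oplus> s2)"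
      using x y XY r1 r2 s1 s2 by algebra
    also have "\<dots> = x [^] Suc p \<otimes> (r1 \<oplus> r2 \<otimes> y) \<oplus> y [^] Suc q \<otimes> (s1 \<otimes> x \<oplus> s2)"
      by (simp add: Xp_def Yq_def)
    finally show ?case using x y r1 r2 s1 s2 by blast
  qed
qed

lemma (in cring) nilradical_ideal: "ideal (nilradical R) R"
proof (rule idealI)
  show "ring R" by (rule ring_axioms)
  show "subgroup (nilradical R) (add_monoid R)"
  proof (rule add.subgroupI)
    show "nilradical R \<subseteq> carrier R" by (auto simp: nilradical_def)
    show "nilradical R \<noteq> {}" unfolding nilradical_def
      by (rule ex_in_conv[THEN iffD1], rule exI[where x="\<zero>"], auto intro!: exI[where x=1])
  next
    fix a assume "a \<in> nilradical R"
    then obtain n :: nat where a: "a \<in> carrier R" and n: "a [^] n = \<zero>" by (auto simp: nilradical_def)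
    have "(\<ominus> a) [^] n = ((\<ominus> \<one>) \<otimes> a) [^] n" using a by (simp add: l_minus)
    also have "\<dots> = (\<ominus> \<one>) [^] n \<otimes> a [^] n" using a by (simp add: nat_pow_distrib)
    finally have "(\<ominus> a) [^] n = \<zero>" using n by simp
    then show "\<ominus> a \<in> nilradical R" using a
      by (auto simp: nilradical_def)
  next
    fix a b assume "a \<in> nilradical R" "b \<in> nilradical R"
    then obtain m n :: nat where a: "a \<in> carrier R" and m: "a [^] m = \<zero>"
      and b: "b \<in> carrier R" and n: "b [^] n = \<zero>" by (auto simp: nilradical_def)
    obtain r s where "r \<in> carrier R" "s \<in> carrier R" "(a \<oplus> b) [^] (m + n) = a [^] m \<otimes> r \<oplus> b [^] n \<otimes> s"
      using binom_aux[OF a b] by blast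
    then have "(a \<oplus> b) [^] (m + n) = \<zero>" using m n by simp
    then show "a \<oplus> b \<in> nilradical R" using a b by (auto simp: nilradical_def)
  qed
next
  fix a x assume "a \<in> nilradical R" "x \<in> carrier R"
  then obtain n :: nat where a: "a \<in> carrier R" and n: "a [^] n = \<zero>" and x: "x \<in> carrier R" by (auto simp: nilradical_def)
  have "(x \<otimes> a) [^] n = \<zero>" using a x n by (simp add: nat_pow_distrib)
  moreover have "(a \<otimes> x) [^] n = \<zero>" using a x n by (simp add: nat_pow_distrib)
  ultimately show "x \<otimes> a \<in> nilradical R" "a \<otimes> x \<in> nilradical R" using a x by (auto simp: nilradical_def)
qed

lemma (in ideal) quot_complemented_iff:
  "complemented (R Quot I) \<longleftrightarrow>
    (\<forall>a\<in>carrier R. \<exists>b\<in>carrier R. a \<otimes> b \<in> I \<and> (\<forall>c\<in>carrier R. (a \<oplus> b) \<otimes> c \<in> I \<longrightarrow> c \<in> I))"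
proof -
  have car: "carrier (R Quot I) = (\<lambda>a. I +> a) ` carrier R"
    by (auto simp: FactRing_def A_RCOSETS_def')
  have mul: "(I +> a) \<otimes>\<^bsub>R Quot I\<^esub> (I +> b) = I +> (a \<otimes> b)" if "a \<in> carrier R" "b \<in> carrier R" for a b
    using that by (simp add: FactRing_def rcoset_mult_add)
  have add: "(I +> a) \<oplus>\<^bsub>R Quot I\<^esub> (I +> b) = I +> (a \<oplus> b)" if "a \<in> carrier R" "b \<in> carrier R" for a b
    using that by (simp add: FactRing_def a_rcos_sum)
  have z: "\<zero>\<^bsub>R Quot I\<^esub> = I" by (simp add: FactRing_def)
  have eq: "I +> a = I \<longleftrightarrow> a \<in> I" if "a \<in> carrier R" for a
    using that rcos_const_imp_mem a_rcos_const by blast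
  have regq: "I +> a \<in> reg (R Quot I) \<longleftrightarrow> (\<forall>c\<in>carrier R. a \<otimes> c \<in> I \<longrightarrow> c \<in> I)" if a: "a \<in> carrier R" for a
    using a by (auto simp: reg_def car mul z eq)
  show ?thesis
    unfolding complemented_def car
    by (auto simp: mul add z eq regq)
qed



lemma prod_simps:
  "carrier (prod_ring I R) = (\<Pi>\<^sub>E i\<in>I. carrier (R i))"
  "x \<otimes>\<^bsub>prod_ring I R\<^esub> y = (\<lambda>i\<in>I. x i \<otimes>\<^bsub>R i\<^esub> y i)"
  "x \<oplus>\<^bsub>prod_ring I R\<^esub> y = (\<lambda>i\<in>I. x i \<oplus>\<^bsub>R i\<^esub> y i)"
  "\<one>\<^bsub>prod_ring I R\<^esub> = (\<lambda>i\<in>I. \<one>\<^bsub>R i\<^esub>)"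
  "\<zero>\<^bsub>prod_ring I R\<^esub> = (\<lambda>i\<in>I. \<zero>\<^bsub>R i\<^esub>)"
  by (simp_all add: prod_ring_def)

lemma prod_pow: "x [^]\<^bsub>prod_ring I R\<^esub> (n::nat) = (\<lambda>i\<in>I. x i [^]\<^bsub>R i\<^esub> n)"
  by (induction n) (auto simp: prod_simps fun_eq_iff)

lemma prod_cring:
  assumes cr: "\<forall>i\<in>I. cring (R i)"
  shows "cring (prod_ring I R)"
proof (rule cringI)
  show "abelian_group (prod_ring I R)"
  proof (rule abelian_groupI)
    fix x assume x: "x \<in> carrier (prod_ring I R)"
    show "\<exists>y\<in>carrier (prod_ring I R). y \<oplus>\<^bsub>prod_ring I R\<^esub> x = \<zero>\<^bsub>prod_ring I R\<^esub>"
      by (rule bexI[where x="\<lambda>i\<in>I. \<ominus>\<^bsub>R i\<^esub> x i"])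
        (use x cr in \<open>auto simp: prod_simps fun_eq_iff PiE_iff intro: cring.cring_simprules extensional_arb[symmetric]\<close>)
  qed (use cr in \<open>auto simp: prod_simps fun_eq_iff PiE_iff intro: cring.cring_simprules extensional_arb[symmetric]\<close>)
  show "comm_monoid (prod_ring I R)"
    by (rule comm_monoidI) (use cr in \<open>auto simp: prod_simps fun_eq_iff PiE_iff intro: cring.cring_simprules extensional_arb[symmetric]\<close>)
qed (use cr in \<open>auto simp: prod_simps fun_eq_iff PiE_iff intro: cring.cring_simprules extensional_arb[symmetric]\<close>)


lemma cr_mc: "cring A \<Longrightarrow> x\<in>carrier A \<Longrightarrow> y\<in>carrier A \<Longrightarrow> x \<otimes>\<^bsub>A\<^esub> y \<in> carrier A"
  by (simp add: cring.cring_simprules)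
lemma cr_ac: "cring A \<Longrightarrow> x\<in>carrier A \<Longrightarrow> y\<in>carrier A \<Longrightarrow> x \<oplus>\<^bsub>A\<^esub> y \<in> carrier A"
  by (simp add: cring.cring_simprules)
lemma cr_zc: "cring A \<Longrightarrow> \<zero>\<^bsub>A\<^esub> \<in> carrier A"
  by (simp add: cring.cring_simprules)
lemma cr_rnull: "cring A \<Longrightarrow> x\<in>carrier A \<Longrightarrow> x \<otimes>\<^bsub>A\<^esub> \<zero>\<^bsub>A\<^esub> = \<zero>\<^bsub>A\<^esub>"
  by (simp add: cring.cring_simprules)
lemma cr_lnull: "cring A \<Longrightarrow> x\<in>carrier A \<Longrightarrow> \<zero>\<^bsub>A\<^esub> \<otimes>\<^bsub>A\<^esub> x = \<zero>\<^bsub>A\<^esub>"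
  by (simp add: cring.cring_simprules)
lemma cr_powS: "cring A \<Longrightarrow> x [^]\<^bsub>A\<^esub> (n::nat) = \<zero>\<^bsub>A\<^esub> \<Longrightarrow> x\<in>carrier A \<Longrightarrow> x [^]\<^bsub>A\<^esub> Suc n = \<zero>\<^bsub>A\<^esub>"
  by (simp add: cring.cring_simprules)
lemma cr_pow0: "cring A \<Longrightarrow> \<zero>\<^bsub>A\<^esub> [^]\<^bsub>A\<^esub> Suc n = \<zero>\<^bsub>A\<^esub>"
  by (simp add: cr_rnull monoid.nat_pow_closed[OF ring.axioms(2)[OF cring.axioms(1)]] cr_zc)


lemma ac_iff:
  assumes "cring A"
  shows "almost_complemented A \<longleftrightarrow> (\<forall>a\<in>carrier A. \<exists>b\<in>carrier A. a \<otimes>\<^bsub>A\<^esub> b \<in> nilradical A \<and>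
     (\<forall>c\<in>carrier A. (a \<oplus>\<^bsub>A\<^esub> b) \<otimes>\<^bsub>A\<^esub> c \<in> nilradical A \<longrightarrow> c \<in> nilradical A))"
  unfolding almost_complemented_def
  by (rule ideal.quot_complemented_iff[OF cring.nilradical_ideal[OF assms]])

lemma prod_nil:
  assumes "x \<in> carrier (prod_ring I R)"
  shows "x \<in> nilradical (prod_ring I R) \<longleftrightarrow> (\<exists>n::nat. \<forall>i\<in>I. x i [^]\<^bsub>R i\<^esub> n = \<zero>\<^bsub>R i\<^esub>)"
  using assms unfolding nilradical_def prod_pow prod_simps
  by (auto simp: fun_eq_iff)

lemma nilI: "x \<in> carrier A \<Longrightarrow> x [^]\<^bsub>A\<^esub> (n::nat) = \<zero>\<^bsub>A\<^esub> \<Longrightarrow> x \<in> nilradical A"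
  by (auto simp: nilradical_def)

theorem mainTheorem9:
  fixes I :: "'i set" and R :: "'i \<Rightarrow> ('a, 'm) ring_scheme"
  assumes "\<forall>i \<in> I. cring (R i)"
  shows "(almost_complemented (prod_ring I R) \<longrightarrow> (\<forall>i \<in> I. almost_complemented (R i)))
    \<and> ((\<forall>i \<in> I. almost_complemented (R i)) \<and> bounded_nilpotence I R
         \<longrightarrow> almost_complemented (prod_ring I R))"
proof (intro conjI impI)
  let ?P = "prod_ring I R"
  have crP: "cring ?P" using prod_cring assms by blast
  have cr: "cring (R i)" if "i \<in> I" for i using assms that by blast
  {
    assume acP: "almost_complemented ?P"
    show "\<forall>i \<in> I. almost_complemented (R i)"
    proof
      fix i assume i: "i \<in> I"
      show "almost_complemented (R i)"
        unfolding ac_iff[OF cr[OF i]]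
      proof
        fix a assume a: "a \<in> carrier (R i)"
        define x where "x = (\<lambda>j\<in>I. if j = i then a else \<zero>\<^bsub>R j\<^esub>)"
        have x: "x \<in> carrier ?P" using a cr_zc[OF cr] by (auto simp: x_def prod_simps)
        obtain y where y: "y \<in> carrier ?P" and xy: "x \<otimes>\<^bsub>?P\<^esub> y \<in> nilradical ?P"
          and yc: "\<And>c. c \<in> carrier ?P \<Longrightarrow> (x \<oplus>\<^bsub>?P\<^esub> y) \<otimes>\<^bsub>?P\<^esub> c \<in> nilradical ?P \<Longrightarrow> c \<in> nilradical ?P"
          using acP x unfolding ac_iff[OF crP] by blast
        have yi: "y i \<in> carrier (R i)" using y i by (auto simp: prod_simps)
        have xyc: "x \<otimes>\<^bsub>?P\<^esub> y \<in> carrier ?P" using x y cr_mc[OF crP] by blast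
        obtain n :: nat where "\<forall>j\<in>I. (x \<otimes>\<^bsub>?P\<^esub> y) j [^]\<^bsub>R j\<^esub> n = \<zero>\<^bsub>R j\<^esub>"
          using xy prod_nil[OF xyc] by blast
        then have "(a \<otimes>\<^bsub>R i\<^esub> y i) [^]\<^bsub>R i\<^esub> n = \<zero>\<^bsub>R i\<^esub>" using i by (auto simp: prod_simps x_def)
        then have 1: "a \<otimes>\<^bsub>R i\<^esub> y i \<in> nilradical (R i)" using a yi cr_mc[OF cr[OF i]] by (intro nilI) auto
        have 2: "c \<in> nilradical (R i)" if c: "c \<in> carrier (R i)"
          and h: "(a \<oplus>\<^bsub>R i\<^esub> y i) \<otimes>\<^bsub>R i\<^esub> c \<in> nilradical (R i)" for c
        proof -
          obtain n :: nat where n: "((a \<oplus>\<^bsub>R i\<^esub> y i) \<otimes>\<^bsub>R i\<^esub> c) [^]\<^bsub>R i\<^esub> n = \<zero>\<^bsub>R i\<^esub>"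
            using h by (auto simp: nilradical_def)
          define C where "C = (\<lambda>j\<in>I. if j = i then c else \<zero>\<^bsub>R j\<^esub>)"
          have C: "C \<in> carrier ?P" using c cr_zc[OF cr] by (auto simp: C_def prod_simps)
          have pc: "(x \<oplus>\<^bsub>?P\<^esub> y) \<otimes>\<^bsub>?P\<^esub> C \<in> carrier ?P" using x y C cr_mc[OF crP] cr_ac[OF crP] by blast
          have "\<forall>j\<in>I. ((x \<oplus>\<^bsub>?P\<^esub> y) \<otimes>\<^bsub>?P\<^esub> C) j [^]\<^bsub>R j\<^esub> Suc n = \<zero>\<^bsub>R j\<^esub>"
          proof
            fix j assume j: "j \<in> I"
            show "((x \<oplus>\<^bsub>?P\<^esub> y) \<otimes>\<^bsub>?P\<^esub> C) j [^]\<^bsub>R j\<^esub> Suc n = \<zero>\<^bsub>R j\<^esub>"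
            proof (cases "j = i")
              case True
              have "((a \<oplus>\<^bsub>R i\<^esub> y i) \<otimes>\<^bsub>R i\<^esub> c) [^]\<^bsub>R i\<^esub> Suc n = \<zero>\<^bsub>R i\<^esub>"
                using n a c yi cr_mc[OF cr[OF i]] cr_ac[OF cr[OF i]] by (intro cr_powS[OF cr[OF i]]) auto
              then show ?thesis using True j by (simp add: prod_simps x_def C_def)
            next
              case False
              have yj: "y j \<in> carrier (R j)" using y j by (auto simp: prod_simps)
              have xj: "x j = \<zero>\<^bsub>R j\<^esub>" using False j by (simp add: x_def)
              have "(x j \<oplus>\<^bsub>R j\<^esub> y j) \<otimes>\<^bsub>R j\<^esub> \<zero>\<^bsub>R j\<^esub> = \<zero>\<^bsub>R j\<^esub>"
                unfolding xj using yj cr_zc[OF cr[OF j]] cr_ac[OF cr[OF j]] by (intro cr_rnull[OF cr[OF j]]) auto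
              then show ?thesis using False j cr_pow0[OF cr[OF j]]
                by (simp add: prod_simps C_def)
            qed
          qed
          then have "C \<in> nilradical ?P" using yc[OF C] prod_nil[OF pc] by blast
          then obtain m :: nat where "\<forall>j\<in>I. C j [^]\<^bsub>R j\<^esub> m = \<zero>\<^bsub>R j\<^esub>" using prod_nil[OF C] by blast
          then have "c [^]\<^bsub>R i\<^esub> m = \<zero>\<^bsub>R i\<^esub>" using i by (auto simp: C_def)
          then show ?thesis by (rule nilI[OF c])
        qed
        show "\<exists>b\<in>carrier (R i). a \<otimes>\<^bsub>R i\<^esub> b \<in> nilradical (R i) \<and>
          (\<forall>c\<in>carrier (R i). (a \<oplus>\<^bsub>R i\<^esub> b) \<otimes>\<^bsub>R i\<^esub> c \<in> nilradical (R i) \<longrightarrow> c \<in> nilradical (R i))"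
          using yi 1 2 by blast
      qed
    qed
  }
  {
    assume h: "(\<forall>i \<in> I. almost_complemented (R i)) \<and> bounded_nilpotence I R"
    then obtain k :: nat where k: "\<And>i x. i \<in> I \<Longrightarrow> x \<in> nilradical (R i) \<Longrightarrow> x [^]\<^bsub>R i\<^esub> k = \<zero>\<^bsub>R i\<^esub>"
      unfolding bounded_nilpotence_def by blast
    have aci: "\<forall>i\<in>I. \<forall>a\<in>carrier (R i). \<exists>b\<in>carrier (R i). a \<otimes>\<^bsub>R i\<^esub> b \<in> nilradical (R i) \<and>
     (\<forall>c\<in>carrier (R i). (a \<oplus>\<^bsub>R i\<^esub> b) \<otimes>\<^bsub>R i\<^esub> c \<in> nilradical (R i) \<longrightarrow> c \<in> nilradical (R i))"
      using h ac_iff[OF cr] by blast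
    show "almost_complemented ?P"
      unfolding ac_iff[OF crP]
    proof
      fix a assume a: "a \<in> carrier ?P"
      have ai: "a i \<in> carrier (R i)" if "i \<in> I" for i using a that by (auto simp: prod_simps)
      have "\<forall>i\<in>I. \<exists>b\<in>carrier (R i). a i \<otimes>\<^bsub>R i\<^esub> b \<in> nilradical (R i) \<and>
     (\<forall>c\<in>carrier (R i). (a i \<oplus>\<^bsub>R i\<^esub> b) \<otimes>\<^bsub>R i\<^esub> c \<in> nilradical (R i) \<longrightarrow> c \<in> nilradical (R i))"
        using aci ai by blast
      then obtain f where f: "\<And>i. i \<in> I \<Longrightarrow> f i \<in> carrier (R i)"
        and f1: "\<And>i. i \<in> I \<Longrightarrow> a i \<otimes>\<^bsub>R i\<^esub> f i \<in> nilradical (R i)"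
        and f2: "\<And>i c. i \<in> I \<Longrightarrow> c \<in> carrier (R i) \<Longrightarrow> (a i \<oplus>\<^bsub>R i\<^esub> f i) \<otimes>\<^bsub>R i\<^esub> c \<in> nilradical (R i) \<Longrightarrow> c \<in> nilradical (R i)"
        by metis
      define b where "b = restrict f I"
      have b: "b \<in> carrier ?P" using f by (auto simp: b_def prod_simps)
      have ab: "a \<otimes>\<^bsub>?P\<^esub> b \<in> carrier ?P" using a b cr_mc[OF crP] by blast
      have "a \<otimes>\<^bsub>?P\<^esub> b \<in> nilradical ?P"
        unfolding prod_nil[OF ab]
        by (rule exI[where x=k]) (auto simp: prod_simps b_def intro: k f1)
      moreover have "c \<in> nilradical ?P" if c: "c \<in> carrier ?P"
        and hc: "(a \<oplus>\<^bsub>?P\<^esub> b) \<otimes>\<^bsub>?P\<^esub> c \<in> nilradical ?P" for c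
      proof -
        have pc: "(a \<oplus>\<^bsub>?P\<^esub> b) \<otimes>\<^bsub>?P\<^esub> c \<in> carrier ?P" using a b c cr_mc[OF crP] cr_ac[OF crP] by blast
        obtain n :: nat where n: "\<forall>i\<in>I. ((a \<oplus>\<^bsub>?P\<^esub> b) \<otimes>\<^bsub>?P\<^esub> c) i [^]\<^bsub>R i\<^esub> n = \<zero>\<^bsub>R i\<^esub>"
          using hc prod_nil[OF pc] by blast
        have ci: "c i \<in> carrier (R i)" if "i \<in> I" for i using c that by (auto simp: prod_simps)
        have "c i [^]\<^bsub>R i\<^esub> k = \<zero>\<^bsub>R i\<^esub>" if i: "i \<in> I" for i
        proof -
          have "((a i \<oplus>\<^bsub>R i\<^esub> f i) \<otimes>\<^bsub>R i\<^esub> c i) [^]\<^bsub>R i\<^esub> n = \<zero>\<^bsub>R i\<^esub>"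
            using n i by (auto simp: prod_simps b_def)
          then have "(a i \<oplus>\<^bsub>R i\<^esub> f i) \<otimes>\<^bsub>R i\<^esub> c i \<in> nilradical (R i)"
            using ai[OF i] f[OF i] ci[OF i] cr_mc[OF cr[OF i]] cr_ac[OF cr[OF i]] by (intro nilI) auto
          then show ?thesis using f2[OF i ci[OF i]] k[OF i] by blast
        qed
        then show ?thesis unfolding prod_nil[OF c] by blast
      qed
      ultimately show "\<exists>b\<in>carrier ?P. a \<otimes>\<^bsub>?P\<^esub> b \<in> nilradical ?P \<and>
         (\<forall>c\<in>carrier ?P. (a \<oplus>\<^bsub>?P\<^esub> b) \<otimes>\<^bsub>?P\<^esub> c \<in> nilradical ?P \<longrightarrow> c \<in> nilradical ?P)"
        using b by blast
    qed
  }
qed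

end
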